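(* Let $p>2$ and $L>L_f$. Assume that $\nabla f$ is completely continuous from $L^2(\Omega)$ to $L^p(\Omega)$ (weakly convergent sequences in $L^2(\Omega)$ are mapped to strongly convergent sequences in $L^p(\Omega)$). Let $(u_k)$ be generated by the IHT method with parameter $L$, assume $(u_k)$ is bounded in $L^p(\Omega)$, let $\chi$ be the $L^1(\Omega)$-limit of $(\chi_k)$, and let $u^*\in U_{ad}$ be a weak sequential limit point of $(u_k)$ in $L^2(\Omega)$. Then for every $u\in U_{ad}\cap L^p(\Omega)$, $$\big(\nabla f(u^* )+\alpha u^*\big)(u-u^* )\chi\ge0\quad\text{a.e. in }\Omega.$$
   Context: Let $\Omega\subset\mathbb R^n$ be a bounded open set with Lebesgue measure. Fix $\alpha\ge0$, $\beta>0$, $b\in(0,+\infty]$ and set $U_{ad}:=\{v\in L^2(\Omega): |v(x)|\le b\text{ a.e. in }\Omega\}$. For $t\in\mathbb R$ let $|t|_0:=0$ if $t=0$ and $|t|_0:=1$ if $t\ne0$; for measurable $u$ let $\|u\|_0:=\operatorname{meas}\{x\in\Omega:u(x)\ne0\}$. Define $g(u):=\frac\alpha2\|u\|_{L^2(\Omega)}^2+\beta\|u\|_0$. The function $f:L^2(\Omega)\to\mathbb R$ is weakly lower semicontinuous, bounded from below and Fréchet differentiable; $\nabla f(u)\in L^2(\Omega)$ is the Riesz representative of its derivative, and $\nabla f$ is Lipschitz continuous on $L^2(\Omega)$ with constant $L_f$. IHT method: given $L>0$ and $u_0\in U_{ad}$, for $k=0,1,\dots$ let $u_{k+1}$ be a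 global solution of $\min_{u\in U_{ad}} f(u_k)+\int_\Omega\nabla f(u_k)(u-u_k)\,dx+\frac L2\|u-u_k\|_{L^2(\Omega)}^2+g(u)$ (a solution exists). Let $\chi_k$ denote the characteristic function of $\{x\in\Omega:u_k(x)\ne0\}$; for $L>L_f$ the sequence $(\chi_k)$ converges in $L^1(\Omega)$ to a characteristic function $\chi$. *)

theory Defs
  imports "HOL-Analysis.Analysis"
begin

text \<open>Functions on \<Omega> are represented by real-valued functions on the ambient
Euclidean space; the measure is Lebesgue measure restricted to \<Omega>.\<close>

definition L2 :: "'a::euclidean_space set \<Rightarrow> ('a \<Rightarrow> real) set" where
  "L2 \<Omega> = {u. u \<in> borel_measurable (lebesgue_on \<Omega>) \<and>
               integrable (lebesgue_on \<Omega>) (\<lambda>x. (u x)\<^sup>2)}"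

definition Lp :: "real \<Rightarrow> 'a::euclidean_space set \<Rightarrow> ('a \<Rightarrow> real) set" where
  "Lp p \<Omega> = {u. u \<in> borel_measurable (lebesgue_on \<Omega>) \<and>
               integrable (lebesgue_on \<Omega>) (\<lambda>x. \<bar>u x\<bar> powr p)}"

definition norm2 :: "'a::euclidean_space set \<Rightarrow> ('a \<Rightarrow> real) \<Rightarrow> real" where
  "norm2 \<Omega> u = sqrt (\<integral>x. (u x)\<^sup>2 \<partial>(lebesgue_on \<Omega>))"

definition normp :: "real \<Rightarrow> 'a::euclidean_space set \<Rightarrow> ('a \<Rightarrow> real) \<Rightarrow> real" where
  "normp p \<Omega> u = (\<integral>x. \<bar>u x\<bar> powr p \<partial>(lebesgue_on \<Omega>)) powr (1 / p)"

definition inner2 :: "'a::euclidean_space set \<Rightarrow> ('a \<Rightarrow> real) \<Rightarrow> ('a \<Rightarrow> real) \<Rightarrow> real" where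
  "inner2 \<Omega> u v = (\<integral>x. u x * v x \<partial>(lebesgue_on \<Omega>))"

definition l0 :: "'a::euclidean_space set \<Rightarrow> ('a \<Rightarrow> real) \<Rightarrow> real" where
  "l0 \<Omega> u = measure (lebesgue_on \<Omega>) {x\<in>\<Omega>. u x \<noteq> 0}"

definition Uad :: "'a::euclidean_space set \<Rightarrow> ereal \<Rightarrow> ('a \<Rightarrow> real) set" where
  "Uad \<Omega> b = {v \<in> L2 \<Omega>. AE x in lebesgue_on \<Omega>. ereal \<bar>v x\<bar> \<le> b}"

definition gfun :: "real \<Rightarrow> real \<Rightarrow> 'a::euclidean_space set \<Rightarrow> ('a \<Rightarrow> real) \<Rightarrow> real" where
  "gfun \<alpha> \<beta> \<Omega> u = \<alpha> / 2 * (norm2 \<Omega> u)\<^sup>2 + \<beta> * l0 \<Omega> u"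

definition weak_conv_L2 :: "'a::euclidean_space set \<Rightarrow> (nat \<Rightarrow> 'a \<Rightarrow> real) \<Rightarrow> ('a \<Rightarrow> real) \<Rightarrow> bool" where
  "weak_conv_L2 \<Omega> v w \<longleftrightarrow> (\<forall>k. v k \<in> L2 \<Omega>) \<and> w \<in> L2 \<Omega> \<and>
     (\<forall>z\<in>L2 \<Omega>. (\<lambda>k. inner2 \<Omega> (v k) z) \<longlonglongrightarrow> inner2 \<Omega> w z)"

definition standing_f ::
  "'a::euclidean_space set \<Rightarrow> (('a \<Rightarrow> real) \<Rightarrow> real) \<Rightarrow> (('a \<Rightarrow> real) \<Rightarrow> ('a \<Rightarrow> real)) \<Rightarrow> real \<Rightarrow> bool" where
  "standing_f \<Omega> f G Lf \<longleftrightarrow>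
     (\<forall>v w. weak_conv_L2 \<Omega> v w \<longrightarrow> ereal (f w) \<le> liminf (\<lambda>k. ereal (f (v k)))) \<and>
     (\<exists>c. \<forall>u\<in>L2 \<Omega>. c \<le> f u) \<and>
     (\<forall>u\<in>L2 \<Omega>. G u \<in> L2 \<Omega>) \<and>
     (\<forall>u\<in>L2 \<Omega>. \<forall>\<epsilon>>0. \<exists>\<delta>>0. \<forall>v\<in>L2 \<Omega>. norm2 \<Omega> (\<lambda>x. v x - u x) < \<delta> \<longrightarrow>
         \<bar>f v - f u - inner2 \<Omega> (G u) (\<lambda>x. v x - u x)\<bar> \<le> \<epsilon> * norm2 \<Omega> (\<lambda>x. v x - u x)) \<and>
     (\<forall>u\<in>L2 \<Omega>. \<forall>v\<in>L2 \<Omega>.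
         norm2 \<Omega> (\<lambda>x. G u x - G v x) \<le> Lf * norm2 \<Omega> (\<lambda>x. u x - v x))"

definition iht_obj ::
  "'a::euclidean_space set \<Rightarrow> (('a \<Rightarrow> real) \<Rightarrow> real) \<Rightarrow> (('a \<Rightarrow> real) \<Rightarrow> ('a \<Rightarrow> real)) \<Rightarrow>
   real \<Rightarrow> real \<Rightarrow> real \<Rightarrow> ('a \<Rightarrow> real) \<Rightarrow> ('a \<Rightarrow> real) \<Rightarrow> real" where
  "iht_obj \<Omega> f G \<alpha> \<beta> L uk u = f uk + inner2 \<Omega> (G uk) (\<lambda>x. u x - uk x)
      + L / 2 * (norm2 \<Omega> (\<lambda>x. u x - uk x))\<^sup>2 + gfun \<alpha> \<beta> \<Omega> u"

definition IHT_seq ::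
  "'a::euclidean_space set \<Rightarrow> ereal \<Rightarrow> (('a \<Rightarrow> real) \<Rightarrow> real) \<Rightarrow> (('a \<Rightarrow> real) \<Rightarrow> ('a \<Rightarrow> real)) \<Rightarrow>
   real \<Rightarrow> real \<Rightarrow> real \<Rightarrow> (nat \<Rightarrow> 'a \<Rightarrow> real) \<Rightarrow> bool" where
  "IHT_seq \<Omega> b f G \<alpha> \<beta> L u \<longleftrightarrow> u 0 \<in> Uad \<Omega> b \<and>
     (\<forall>k. u (Suc k) \<in> Uad \<Omega> b \<and>
          (\<forall>v\<in>Uad \<Omega> b. iht_obj \<Omega> f G \<alpha> \<beta> L (u k) (u (Suc k)) \<le> iht_obj \<Omega> f G \<alpha> \<beta> L (u k) v))"

definition chi :: "('a \<Rightarrow> real) \<Rightarrow> 'a \<Rightarrow> real" where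
  "chi u = indicator {x. u x \<noteq> 0}"

end

theory Submission
  imports Defs
begin


lemma fin_meas:
  fixes \<Omega> :: "'a::euclidean_space set"
  assumes "open \<Omega>" "bounded \<Omega>"
  shows "finite_measure (lebesgue_on \<Omega>)"
proof -
  have L: "\<Omega> \<in> sets lebesgue" using assms(1) by simp
  have "\<Omega> \<in> lmeasurable" using bounded_set_imp_lmeasurable[OF assms(2) L] .
  then have "emeasure lebesgue \<Omega> \<noteq> top" by (rule fmeasurableD2)
  then show ?thesis
    by (intro finite_measureI) (simp add: L emeasure_restrict_space)
qed

lemma L2_prod_int:
  assumes "u \<in> L2 \<Omega>" "v \<in> L2 \<Omega>"
  shows "integrable (lebesgue_on \<Omega>) (\<lambda>x. u x * v x)"
proof -
  have i: "integrable (lebesgue_on \<Omega>) (\<lambda>x. ((u x)\<^sup>2 + (v x)\<^sup>2) / 2)"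
    using assms unfolding L2_def by auto
  show ?thesis
  proof (rule Bochner_Integration.integrable_bound[OF i])
    show "(\<lambda>x. u x * v x) \<in> borel_measurable (lebesgue_on \<Omega>)" using assms unfolding L2_def by auto
    show "AE x in lebesgue_on \<Omega>. norm (u x * v x) \<le> norm (((u x)\<^sup>2 + (v x)\<^sup>2) / 2)"
    proof (rule AE_I2)
      fix x
      have "0 \<le> (\<bar>u x\<bar> - \<bar>v x\<bar>)\<^sup>2" by simp
      then show "norm (u x * v x) \<le> norm (((u x)\<^sup>2 + (v x)\<^sup>2) / 2)"
        by (simp add: power2_eq_square abs_mult algebra_simps)
    qed
  qed
qed

lemma int_lin3:
  fixes f g h :: "'b \<Rightarrow> real"
  assumes "integrable M f" "integrable M g" "integrable M h"
  shows "(\<integral>x. a * f x + b * g x + c * h x \<partial>M) = a * (\<integral>x. f x \<partial>M) + b * (\<integral>x. g x \<partial>M) + c * (\<integral>x. h x \<partial>M)"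
  and "integrable M (\<lambda>x. a * f x + b * g x + c * h x)"
  using assms by (simp_all add: Bochner_Integration.integral_add)

lemma L2_lin:
  assumes "u \<in> L2 \<Omega>" "v \<in> L2 \<Omega>"
  shows "(\<lambda>x. a * u x + b * v x) \<in> L2 \<Omega>"
proof -
  have "integrable (lebesgue_on \<Omega>) (\<lambda>x. a\<^sup>2 * (u x)\<^sup>2 + (2*a*b) * (u x * v x) + b\<^sup>2 * (v x)\<^sup>2)"
    using L2_prod_int[OF assms] assms unfolding L2_def by (intro int_lin3) auto
  moreover have "(\<lambda>x. a\<^sup>2 * (u x)\<^sup>2 + (2*a*b) * (u x * v x) + b\<^sup>2 * (v x)\<^sup>2) = (\<lambda>x. (a * u x + b * v x)\<^sup>2)"
    by (auto simp: power2_eq_square algebra_simps)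
  ultimately show ?thesis using assms unfolding L2_def by auto
qed

lemma L2_add: "u \<in> L2 \<Omega> \<Longrightarrow> v \<in> L2 \<Omega> \<Longrightarrow> (\<lambda>x. u x + v x) \<in> L2 \<Omega>"
  using L2_lin[of u \<Omega> v 1 1] by simp

lemma L2_scale: "u \<in> L2 \<Omega> \<Longrightarrow> (\<lambda>x. c * u x) \<in> L2 \<Omega>"
  unfolding L2_def by (auto simp: power_mult_distrib)

lemma L2_diff: "u \<in> L2 \<Omega> \<Longrightarrow> v \<in> L2 \<Omega> \<Longrightarrow> (\<lambda>x. u x - v x) \<in> L2 \<Omega>"
  using L2_lin[of u \<Omega> v 1 "-1"] by simp

lemma L2_bdd_mult:
  assumes "u \<in> L2 \<Omega>" "\<psi> \<in> borel_measurable (lebesgue_on \<Omega>)" "\<And>x. \<bar>\<psi> x\<bar> \<le> 1"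
  shows "(\<lambda>x. \<psi> x * u x) \<in> L2 \<Omega>"
  unfolding L2_def
proof (intro CollectI conjI)
  show "(\<lambda>x. \<psi> x * u x) \<in> borel_measurable (lebesgue_on \<Omega>)" using assms unfolding L2_def by auto
  show "integrable (lebesgue_on \<Omega>) (\<lambda>x. (\<psi> x * u x)\<^sup>2)"
  proof (rule Bochner_Integration.integrable_bound)
    show "integrable (lebesgue_on \<Omega>) (\<lambda>x. (u x)\<^sup>2)" using assms unfolding L2_def by auto
    show "(\<lambda>x. (\<psi> x * u x)\<^sup>2) \<in> borel_measurable (lebesgue_on \<Omega>)" using assms unfolding L2_def by auto
    show "AE x in lebesgue_on \<Omega>. norm ((\<psi> x * u x)\<^sup>2) \<le> norm ((u x)\<^sup>2)"
    proof (rule AE_I2)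
      fix x
      have "(\<psi> x)\<^sup>2 \<le> 1" using assms(3)[of x] by (simp add: abs_square_le_1)
      then have "(\<psi> x)\<^sup>2 * (u x)\<^sup>2 \<le> 1 * (u x)\<^sup>2" by (intro mult_right_mono) auto
      then show "norm ((\<psi> x * u x)\<^sup>2) \<le> norm ((u x)\<^sup>2)" by (simp add: power_mult_distrib)
    qed
  qed
qed

lemma norm2_sq: "u \<in> L2 \<Omega> \<Longrightarrow> (norm2 \<Omega> u)\<^sup>2 = (\<integral>x. (u x)\<^sup>2 \<partial>(lebesgue_on \<Omega>))"
  unfolding norm2_def by (simp add: integral_nonneg_AE)

lemma norm2_nonneg: "norm2 \<Omega> u \<ge> 0"
  unfolding norm2_def by (simp add: integral_nonneg_AE)

lemma quad_disc:
  fixes A B C :: real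
  assumes "\<And>t. 0 \<le> A + 2 * B * t + C * t\<^sup>2" "A \<ge> 0" "C \<ge> 0"
  shows "B\<^sup>2 \<le> A * C"
proof (cases "C = 0")
  case True
  have "B = 0"
  proof (rule ccontr)
    assume "B \<noteq> 0"
    have "0 \<le> A + 2 * B * (- (A + 1) / (2 * B))" using assms(1)[of "- (A + 1) / (2 * B)"] True by simp
    also have "\<dots> = -1" using \<open>B \<noteq> 0\<close> by (simp add: field_simps)
    finally show False by simp
  qed
  then show ?thesis using True by simp
next
  case False
  then have Cp: "C > 0" using assms(3) by simp
  have "0 \<le> A + 2 * B * (- B / C) + C * (- B / C)\<^sup>2" by (rule assms(1))
  also have "\<dots> = A - B\<^sup>2 / C" using Cp by (simp add: field_simps power2_eq_square)
  finally show ?thesis using Cp by (simp add: field_simps)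
qed

lemma CS2:
  assumes "u \<in> L2 \<Omega>" "v \<in> L2 \<Omega>"
  shows "\<bar>inner2 \<Omega> u v\<bar> \<le> norm2 \<Omega> u * norm2 \<Omega> v"
proof -
  let ?M = "lebesgue_on \<Omega>"
  define A where "A = (\<integral>x. (u x)\<^sup>2 \<partial>?M)"
  define B where "B = inner2 \<Omega> u v"
  define C where "C = (\<integral>x. (v x)\<^sup>2 \<partial>?M)"
  have iu: "integrable ?M (\<lambda>x. (u x)\<^sup>2)" and iv: "integrable ?M (\<lambda>x. (v x)\<^sup>2)"
    using assms unfolding L2_def by auto
  have iuv: "integrable ?M (\<lambda>x. u x * v x)" by (rule L2_prod_int[OF assms])
  have "0 \<le> A + 2 * B * t + C * t\<^sup>2" for t
  proof -
    have "0 \<le> (\<integral>x. (u x + t * v x)\<^sup>2 \<partial>?M)" by (simp add: integral_nonneg_AE)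
    also have "(\<integral>x. (u x + t * v x)\<^sup>2 \<partial>?M) = (\<integral>x. (u x)\<^sup>2 + (2 * t) * (u x * v x) + t\<^sup>2 * (v x)\<^sup>2 \<partial>?M)"
      by (rule Bochner_Integration.integral_cong) (auto simp: power2_eq_square algebra_simps)
    also have "\<dots> = A + 2 * B * t + C * t\<^sup>2"
      using int_lin3(1)[OF iu iuv iv, of 1 "2*t" "t\<^sup>2"] unfolding A_def B_def C_def inner2_def by (simp add: algebra_simps)
    finally show ?thesis .
  qed
  moreover have "A \<ge> 0" "C \<ge> 0" unfolding A_def C_def by (simp_all add: integral_nonneg_AE)
  ultimately have "B\<^sup>2 \<le> A * C" by (rule quad_disc)
  then have "sqrt (B\<^sup>2) \<le> sqrt (A * C)" by (rule real_sqrt_le_mono)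
  then show ?thesis unfolding B_def A_def C_def norm2_def by (simp add: real_sqrt_mult)
qed



lemma norm2_scale: "norm2 \<Omega> (\<lambda>x. c * u x) = \<bar>c\<bar> * norm2 \<Omega> u"
  unfolding norm2_def by (simp add: power_mult_distrib real_sqrt_mult)

lemma inner2_scale: "inner2 \<Omega> g (\<lambda>x. c * u x) = c * inner2 \<Omega> g u"
  unfolding inner2_def by (simp add: algebra_simps)

lemma inner2_diff_left:
  assumes "a \<in> L2 \<Omega>" "b \<in> L2 \<Omega>" "d \<in> L2 \<Omega>"
  shows "inner2 \<Omega> (\<lambda>x. a x - b x) d = inner2 \<Omega> a d - inner2 \<Omega> b d"
  unfolding inner2_def using L2_prod_int[OF assms(1,3)] L2_prod_int[OF assms(2,3)]
  by (simp add: left_diff_distrib)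

lemma descent:
  assumes sf: "standing_f \<Omega> f G Lf" and u: "u \<in> L2 \<Omega>" and v: "v \<in> L2 \<Omega>"
  shows "f v \<le> f u + inner2 \<Omega> (G u) (\<lambda>x. v x - u x) + Lf / 2 * (norm2 \<Omega> (\<lambda>x. v x - u x))\<^sup>2"
proof -
  define d where "d = (\<lambda>x. v x - u x)"
  define w where "w = (\<lambda>t x. u x + t * d x)"
  define D where "D = norm2 \<Omega> d"
  have d: "d \<in> L2 \<Omega>" unfolding d_def using L2_diff[OF v u] .
  have w: "w t \<in> L2 \<Omega>" for t unfolding w_def using L2_lin[OF u d, of 1 t] by simp
  have D0: "D \<ge> 0" unfolding D_def by (rule norm2_nonneg)
  have GL2: "\<forall>u\<in>L2 \<Omega>. G u \<in> L2 \<Omega>" using sf unfolding standing_f_def by blast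
  have fr: "\<forall>u\<in>L2 \<Omega>. \<forall>\<epsilon>>0. \<exists>\<delta>>0. \<forall>v\<in>L2 \<Omega>. norm2 \<Omega> (\<lambda>x. v x - u x) < \<delta> \<longrightarrow>
         \<bar>f v - f u - inner2 \<Omega> (G u) (\<lambda>x. v x - u x)\<bar> \<le> \<epsilon> * norm2 \<Omega> (\<lambda>x. v x - u x)"
    using sf unfolding standing_f_def by blast
  have lip: "\<forall>u\<in>L2 \<Omega>. \<forall>v\<in>L2 \<Omega>.
         norm2 \<Omega> (\<lambda>x. G u x - G v x) \<le> Lf * norm2 \<Omega> (\<lambda>x. u x - v x)"
    using sf unfolding standing_f_def by blast
  have wdiff: "(\<lambda>x. w y x - w t x) = (\<lambda>x. (y - t) * d x)" for y t
    unfolding w_def by (auto simp: algebra_simps)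
  define \<phi>' where "\<phi>' = (\<lambda>t. inner2 \<Omega> (G (w t)) d)"
  have deriv: "((\<lambda>t. f (w t)) has_real_derivative \<phi>' t) (at t)" for t
    unfolding has_field_derivative_def has_derivative_at_alt
  proof (intro conjI allI impI)
    show "bounded_linear ((*) (\<phi>' t))" by (rule bounded_linear_mult_right)
    fix e :: real assume e: "e > 0"
    then have "e / (D + 1) > 0" using D0 by simp
    then obtain \<delta> where \<delta>: "\<delta> > 0" and H: "\<forall>v\<in>L2 \<Omega>. norm2 \<Omega> (\<lambda>x. v x - w t x) < \<delta> \<longrightarrow>
         \<bar>f v - f (w t) - inner2 \<Omega> (G (w t)) (\<lambda>x. v x - w t x)\<bar> \<le> e / (D + 1) * norm2 \<Omega> (\<lambda>x. v x - w t x)"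
      using fr w by blast
    show "\<exists>d>0. \<forall>y. norm (y - t) < d \<longrightarrow> norm (f (w y) - f (w t) - \<phi>' t * (y - t)) \<le> e * norm (y - t)"
    proof (intro exI[of _ "\<delta> / (D + 1)"] conjI allI impI)
      show "\<delta> / (D + 1) > 0" using \<delta> D0 by simp
      fix y assume y: "norm (y - t) < \<delta> / (D + 1)"
      have n: "norm2 \<Omega> (\<lambda>x. w y x - w t x) = \<bar>y - t\<bar> * D"
        unfolding wdiff D_def by (rule norm2_scale)
      have "\<bar>y - t\<bar> * D \<le> \<bar>y - t\<bar> * (D + 1)" by (simp add: mult_left_mono)
      also have "\<dots> < \<delta>" using y D0 by (simp add: field_simps)
      finally have lt: "norm2 \<Omega> (\<lambda>x. w y x - w t x) < \<delta>" using n by simp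
      have "\<bar>f (w y) - f (w t) - inner2 \<Omega> (G (w t)) (\<lambda>x. w y x - w t x)\<bar> \<le> e / (D + 1) * (\<bar>y - t\<bar> * D)"
        using H w[of y] lt n by auto
      also have "\<dots> \<le> e * \<bar>y - t\<bar>"
      proof -
        have "D / (D + 1) \<le> 1" using D0 by simp
        then have "e * \<bar>y - t\<bar> * (D / (D + 1)) \<le> e * \<bar>y - t\<bar> * 1"
          using e by (intro mult_left_mono) auto
        then show ?thesis by (simp add: field_simps)
      qed
      finally show "norm (f (w y) - f (w t) - \<phi>' t * (y - t)) \<le> e * norm (y - t)"
        unfolding \<phi>'_def wdiff inner2_scale by (simp add: algebra_simps)
    qed
  qed
  define \<psi> where "\<psi> = (\<lambda>t. f (w t) - t * \<phi>' 0 - Lf / 2 * t\<^sup>2 * D\<^sup>2)"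
  have "\<psi> 1 \<le> \<psi> 0"
  proof (rule DERIV_nonpos_imp_nonincreasing[of 0 1 \<psi>])
    fix t :: real assume t: "0 \<le> t" "t \<le> 1"
    have "(\<psi> has_real_derivative (\<phi>' t - \<phi>' 0 - Lf * t * D\<^sup>2)) (at t)"
      unfolding \<psi>_def
      by (rule derivative_eq_intros deriv refl | simp add: power2_eq_square)+
    moreover have "\<phi>' t - \<phi>' 0 - Lf * t * D\<^sup>2 \<le> 0"
    proof -
      have w0: "w 0 = u" unfolding w_def by auto
      have "\<phi>' t - \<phi>' 0 = inner2 \<Omega> (\<lambda>x. G (w t) x - G u x) d"
        unfolding \<phi>'_def w0 using inner2_diff_left GL2 w u d by metis
      also have "\<dots> \<le> norm2 \<Omega> (\<lambda>x. G (w t) x - G u x) * D"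
        using CS2[OF L2_diff[OF bspec[OF GL2 w[of t]] bspec[OF GL2 u]] d] unfolding D_def by linarith
      also have "\<dots> \<le> (Lf * norm2 \<Omega> (\<lambda>x. w t x - u x)) * D"
        using lip w u D0 by (intro mult_right_mono) auto
      also have "norm2 \<Omega> (\<lambda>x. w t x - u x) = t * D"
        using wdiff[of t 0] w0 norm2_scale[of \<Omega> t d] t unfolding D_def by simp
      finally show ?thesis by (simp add: power2_eq_square algebra_simps)
    qed
    ultimately show "\<exists>y. (\<psi> has_real_derivative y) (at t) \<and> y \<le> 0" by blast
  qed simp
  moreover have "w 1 = v" "w 0 = u" unfolding w_def d_def by auto
  moreover have "(norm2 \<Omega> (\<lambda>x. v x - u x))\<^sup>2 = D\<^sup>2" unfolding D_def d_def ..
  ultimately show ?thesis unfolding \<psi>_def \<phi>'_def d_def by simp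
qed



lemma norm2_expand:
  assumes a: "a \<in> L2 \<Omega>" and h: "h \<in> L2 \<Omega>"
  shows "(norm2 \<Omega> (\<lambda>x. a x + s * h x))\<^sup>2 = (norm2 \<Omega> a)\<^sup>2 + 2 * s * inner2 \<Omega> a h + s\<^sup>2 * (norm2 \<Omega> h)\<^sup>2"
proof -
  have ia: "integrable (lebesgue_on \<Omega>) (\<lambda>x. (a x)\<^sup>2)" and ih: "integrable (lebesgue_on \<Omega>) (\<lambda>x. (h x)\<^sup>2)"
    using a h unfolding L2_def by auto
  have "(norm2 \<Omega> (\<lambda>x. a x + s * h x))\<^sup>2 = (\<integral>x. (a x + s * h x)\<^sup>2 \<partial>lebesgue_on \<Omega>)"
    using L2_lin[OF a h, of 1 s] by (simp add: norm2_sq)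
  also have "\<dots> = (\<integral>x. 1 * (a x)\<^sup>2 + (2 * s) * (a x * h x) + s\<^sup>2 * (h x)\<^sup>2 \<partial>lebesgue_on \<Omega>)"
    by (rule Bochner_Integration.integral_cong) (auto simp: power2_eq_square algebra_simps)
  also have "\<dots> = (norm2 \<Omega> a)\<^sup>2 + 2 * s * inner2 \<Omega> a h + s\<^sup>2 * (norm2 \<Omega> h)\<^sup>2"
    by (subst int_lin3(1)[OF ia L2_prod_int[OF a h] ih]) (simp add: norm2_sq[OF a] norm2_sq[OF h] inner2_def)
  finally show ?thesis .
qed

lemma quad_small:
  fixes a c :: real
  assumes "\<And>s. 0 < s \<Longrightarrow> s \<le> 1 \<Longrightarrow> 0 \<le> s * a + s\<^sup>2 * c"
  shows "0 \<le> a"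
proof (rule ccontr)
  assume "\<not> 0 \<le> a"
  then have an: "a < 0" by simp
  define s where "s = min 1 (- a / (2 * (\<bar>c\<bar> + 1)))"
  have "- a / (2 * (\<bar>c\<bar> + 1)) > 0" using an by (intro divide_pos_pos) auto
  then have s0: "0 < s" "s \<le> 1" unfolding s_def by auto
  have "s \<le> - a / (2 * (\<bar>c\<bar> + 1))" unfolding s_def by simp
  then have "s * (2 * (\<bar>c\<bar> + 1)) \<le> - a" by (simp add: field_simps)
  moreover have "s * \<bar>c\<bar> < s * (2 * (\<bar>c\<bar> + 1))" using s0 by (intro mult_strict_left_mono) auto
  ultimately have "s * \<bar>c\<bar> < - a" by linarith
  moreover have "s * c \<le> s * \<bar>c\<bar>" using s0 by (intro mult_left_mono) auto
  ultimately have "a + s * c < 0" by linarith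
  then have "s * (a + s * c) < 0" using s0 by (simp add: mult_pos_neg)
  moreover have "0 \<le> s * (a + s * c)" using assms[OF s0] by (simp add: power2_eq_square algebra_simps)
  ultimately show False by simp
qed

lemma Uad_L2: "v \<in> Uad \<Omega> b \<Longrightarrow> v \<in> L2 \<Omega>" unfolding Uad_def by auto

lemma space_leb_on: "open \<Omega> \<Longrightarrow> space (lebesgue_on \<Omega>) = \<Omega>"
  by (simp add: space_restrict_space)

lemma opt_ineq:
  fixes \<Omega> :: "'a::euclidean_space set"
  assumes op: "open \<Omega>" and bd: "bounded \<Omega>" and \<beta>: "\<beta> \<ge> 0"
    and uk: "uk \<in> L2 \<Omega>" and u': "u' \<in> Uad \<Omega> b"
    and gk: "g \<in> L2 \<Omega>"
    and min: "\<forall>v\<in>Uad \<Omega> b. iht_obj \<Omega> f G \<alpha> \<beta> L uk u' \<le> iht_obj \<Omega> f G \<alpha> \<beta> L uk v"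
    and gdef: "g = G uk"
    and v: "v \<in> Uad \<Omega> b"
    and \<psi>m: "\<psi> \<in> borel_measurable (lebesgue_on \<Omega>)" and \<psi>01: "\<And>x. 0 \<le> \<psi> x \<and> \<psi> x \<le> 1"
    and \<psi>0: "\<And>x. u' x = 0 \<Longrightarrow> \<psi> x = 0"
  shows "0 \<le> (\<integral>x. \<psi> x * (g x + L * (u' x - uk x) + \<alpha> * u' x) * (v x - u' x) \<partial>lebesgue_on \<Omega>)"
proof -
  let ?M = "lebesgue_on \<Omega>"
  have fm: "finite_measure ?M" by (rule fin_meas[OF op bd])
  have u'L: "u' \<in> L2 \<Omega>" and vL: "v \<in> L2 \<Omega>" using u' v by (auto intro: Uad_L2)
  define h where "h = (\<lambda>x. \<psi> x * (v x - u' x))"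
  define e where "e = (\<lambda>x. u' x - uk x)"
  have hL: "h \<in> L2 \<Omega>" unfolding h_def using L2_bdd_mult[OF L2_diff[OF vL u'L] \<psi>m] \<psi>01 by auto
  have eL: "e \<in> L2 \<Omega>" unfolding e_def using L2_diff[OF u'L uk] .
  define A where "A = inner2 \<Omega> g h + L * inner2 \<Omega> e h + \<alpha> * inner2 \<Omega> u' h"
  define C where "C = (L + \<alpha>) / 2 * (norm2 \<Omega> h)\<^sup>2"
  have key: "0 \<le> s * A + s\<^sup>2 * C" if s: "0 < s" "s \<le> 1" for s
  proof -
    define w where "w = (\<lambda>x. u' x + s * h x)"
    have wL: "w \<in> L2 \<Omega>" unfolding w_def using L2_lin[OF u'L hL, of 1 s] by simp
    have wU: "w \<in> Uad \<Omega> b" unfolding Uad_def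
    proof (intro CollectI conjI wL)
      have "AE x in ?M. ereal \<bar>u' x\<bar> \<le> b" "AE x in ?M. ereal \<bar>v x\<bar> \<le> b"
        using u' v unfolding Uad_def by auto
      then show "AE x in ?M. ereal \<bar>w x\<bar> \<le> b"
      proof eventually_elim
        case (elim x)
        define \<theta> where "\<theta> = s * \<psi> x"
        have \<theta>: "0 \<le> \<theta>" "\<theta> \<le> 1" unfolding \<theta>_def using s \<psi>01[of x] by (auto intro: mult_le_one)
        have "w x = (1 - \<theta>) * u' x + \<theta> * v x" unfolding w_def h_def \<theta>_def by (simp add: algebra_simps)
        moreover have "\<bar>(1 - \<theta>) * u' x + \<theta> * v x\<bar> \<le> \<bar>(1 - \<theta>) * u' x\<bar> + \<bar>\<theta> * v x\<bar>" by (rule abs_triangle_ineq)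
        ultimately have le: "\<bar>w x\<bar> \<le> (1 - \<theta>) * \<bar>u' x\<bar> + \<theta> * \<bar>v x\<bar>"
          using \<theta> by (simp add: abs_mult)
        show ?case
        proof (cases b)
          case (real r)
          then have "\<bar>u' x\<bar> \<le> r" "\<bar>v x\<bar> \<le> r" using elim by auto
          then have "(1 - \<theta>) * \<bar>u' x\<bar> + \<theta> * \<bar>v x\<bar> \<le> (1 - \<theta>) * r + \<theta> * r"
            using \<theta> by (intro add_mono mult_left_mono) auto
          then show ?thesis using le real by (simp add: algebra_simps)
        next
          case PInf then show ?thesis by simp
        next
          case MInf then show ?thesis using elim by simp
        qed
      qed
    qed
    have l0: "l0 \<Omega> w \<le> l0 \<Omega> u'"
      unfolding l0_def
    proof (rule finite_measure.finite_measure_mono[OF fm])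
      show "{x \<in> \<Omega>. w x \<noteq> 0} \<subseteq> {x \<in> \<Omega>. u' x \<noteq> 0}" unfolding w_def h_def using \<psi>0 by auto
      have "u' \<in> borel_measurable ?M" using u'L unfolding L2_def by auto
      then have "{x \<in> space ?M. u' x \<noteq> 0} \<in> sets ?M" by measurable
      then show "{x \<in> \<Omega>. u' x \<noteq> 0} \<in> sets ?M" using space_leb_on[OF op] by simp
    qed
    moreover have we: "(\<lambda>x. w x - uk x) = (\<lambda>x. e x + s * h x)" unfolding w_def e_def by auto
    moreover have "inner2 \<Omega> g (\<lambda>x. e x + s * h x) = inner2 \<Omega> g e + s * inner2 \<Omega> g h"
      unfolding inner2_def using L2_prod_int[OF gk eL] L2_prod_int[OF gk hL]
      by (simp add: distrib_left algebra_simps)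
    ultimately have ip: "inner2 \<Omega> g (\<lambda>x. w x - uk x) = inner2 \<Omega> g e + s * inner2 \<Omega> g h" by simp
    have o1: "iht_obj \<Omega> f G \<alpha> \<beta> L uk u' = f uk + inner2 \<Omega> g e + L / 2 * (norm2 \<Omega> e)\<^sup>2 + (\<alpha> / 2 * (norm2 \<Omega> u')\<^sup>2 + \<beta> * l0 \<Omega> u')"
      unfolding iht_obj_def gfun_def gdef e_def ..
    have o2: "iht_obj \<Omega> f G \<alpha> \<beta> L uk w = f uk + (inner2 \<Omega> g e + s * inner2 \<Omega> g h) + L / 2 * (norm2 \<Omega> (\<lambda>x. e x + s * h x))\<^sup>2 + (\<alpha> / 2 * (norm2 \<Omega> w)\<^sup>2 + \<beta> * l0 \<Omega> w)"
      unfolding iht_obj_def gfun_def gdef[symmetric] ip[symmetric] we[symmetric] ..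
    have b: "\<beta> * l0 \<Omega> w \<le> \<beta> * l0 \<Omega> u'" using mult_left_mono[OF l0 \<beta>] .
    have "iht_obj \<Omega> f G \<alpha> \<beta> L uk u' \<le> iht_obj \<Omega> f G \<alpha> \<beta> L uk w" using min wU by blast
    then have "0 \<le> s * inner2 \<Omega> g h + (L / 2 * (norm2 \<Omega> (\<lambda>x. e x + s * h x))\<^sup>2 - L / 2 * (norm2 \<Omega> e)\<^sup>2)
       + (\<alpha> / 2 * (norm2 \<Omega> w)\<^sup>2 - \<alpha> / 2 * (norm2 \<Omega> u')\<^sup>2)"
      unfolding o1 o2 using b by linarith
    also have "\<dots> = s * A + s\<^sup>2 * C"
      unfolding norm2_expand[OF eL hL] w_def norm2_expand[OF u'L hL] A_def C_def
      by (simp add: algebra_simps)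
    finally show ?thesis .
  qed
  have "0 \<le> A" by (rule quad_small[OF key])
  also have "A = (\<integral>x. \<psi> x * (g x + L * (u' x - uk x) + \<alpha> * u' x) * (v x - u' x) \<partial>?M)"
  proof -
    have "A = (\<integral>x. 1 * (g x * h x) + L * (e x * h x) + \<alpha> * (u' x * h x) \<partial>?M)"
      unfolding A_def inner2_def
      by (subst int_lin3(1)[OF L2_prod_int[OF gk hL] L2_prod_int[OF eL hL] L2_prod_int[OF u'L hL]]) simp
    also have "\<dots> = (\<integral>x. \<psi> x * (g x + L * (u' x - uk x) + \<alpha> * u' x) * (v x - u' x) \<partial>?M)"
      by (rule Bochner_Integration.integral_cong) (auto simp: h_def e_def algebra_simps)
    finally show ?thesis .
  qed
  finally show ?thesis .
qed



lemma IHT_L2: "IHT_seq \<Omega> b f G \<alpha> \<beta> L u \<Longrightarrow> u k \<in> Uad \<Omega> b"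
  unfolding IHT_seq_def by (cases k) auto

lemma inner2_zero: "inner2 \<Omega> g (\<lambda>x. 0) = 0" unfolding inner2_def by simp
lemma norm2_zero: "norm2 \<Omega> (\<lambda>x. 0) = 0" unfolding norm2_def by simp

lemma seq_d0:
  assumes sf: "standing_f \<Omega> f G Lf" and seq: "IHT_seq \<Omega> b f G \<alpha> \<beta> L u"
    and \<alpha>: "\<alpha> \<ge> 0" and \<beta>: "\<beta> \<ge> 0" and L: "L > Lf"
  shows "(\<lambda>k. norm2 \<Omega> (\<lambda>x. u (Suc k) x - u k x)) \<longlonglongrightarrow> 0"
proof -
  define F where "F = (\<lambda>k. f (u k) + gfun \<alpha> \<beta> \<Omega> (u k))"
  define D where "D = (\<lambda>k. norm2 \<Omega> (\<lambda>x. u (Suc k) x - u k x))"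
  have uL: "u k \<in> L2 \<Omega>" for k using IHT_L2[OF seq] Uad_L2 by blast
  have step: "F (Suc k) + (L - Lf) / 2 * (D k)\<^sup>2 \<le> F k" for k
  proof -
    have "iht_obj \<Omega> f G \<alpha> \<beta> L (u k) (u (Suc k)) \<le> iht_obj \<Omega> f G \<alpha> \<beta> L (u k) (u k)"
      using seq IHT_L2[OF seq, of k] unfolding IHT_seq_def by blast
    moreover have "iht_obj \<Omega> f G \<alpha> \<beta> L (u k) (u k) = F k"
      unfolding iht_obj_def F_def by (simp add: inner2_zero norm2_zero)
    moreover have "f (u (Suc k)) \<le> f (u k) + inner2 \<Omega> (G (u k)) (\<lambda>x. u (Suc k) x - u k x) + Lf / 2 * (D k)\<^sup>2"
      unfolding D_def by (rule descent[OF sf uL uL])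
    moreover have "(L - Lf) / 2 * (D k)\<^sup>2 = L / 2 * (D k)\<^sup>2 - Lf / 2 * (D k)\<^sup>2" by (simp add: left_diff_distrib diff_divide_distrib)
    ultimately show ?thesis unfolding iht_obj_def F_def D_def by linarith
  qed
  obtain c where c: "\<forall>v\<in>L2 \<Omega>. c \<le> f v" using sf unfolding standing_f_def by blast
  have Fc: "c \<le> F k" for k
  proof -
    have "0 \<le> gfun \<alpha> \<beta> \<Omega> (u k)" unfolding gfun_def l0_def using \<alpha> \<beta> by simp
    then show ?thesis unfolding F_def using c uL by (smt (verit))
  qed
  have sum: "F N + (L - Lf) / 2 * (\<Sum>k<N. (D k)\<^sup>2) \<le> F 0" for N
  proof (induction N)
    case (Suc N)
    then show ?case using step[of N] by (simp add: algebra_simps)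
  qed simp
  have "summable (\<lambda>k. (D k)\<^sup>2)"
  proof (rule summableI_nonneg_bounded)
    fix N
    have "(L - Lf) / 2 * (\<Sum>k<N. (D k)\<^sup>2) \<le> F 0 - c" using sum[of N] Fc[of N] by linarith
    then show "(\<Sum>k<N. (D k)\<^sup>2) \<le> (F 0 - c) * 2 / (L - Lf)" using L by (simp add: field_simps)
  qed simp
  then have "(\<lambda>k. (D k)\<^sup>2) \<longlonglongrightarrow> 0" by (rule summable_LIMSEQ_zero)
  then have "(\<lambda>k. sqrt ((D k)\<^sup>2)) \<longlonglongrightarrow> sqrt 0" by (rule tendsto_real_sqrt)
  moreover have "sqrt ((D k)\<^sup>2) = D k" for k unfolding D_def by (simp add: abs_of_nonneg[OF norm2_nonneg])
  ultimately show ?thesis unfolding D_def by simp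
qed

lemma int_powr_le:
  assumes "normp p \<Omega> h \<le> C" "p > 0"
  shows "(\<integral>x. \<bar>h x\<bar> powr p \<partial>lebesgue_on \<Omega>) \<le> C powr p"
proof -
  define I where "I = (\<integral>x. \<bar>h x\<bar> powr p \<partial>lebesgue_on \<Omega>)"
  have I0: "I \<ge> 0" unfolding I_def by (simp add: integral_nonneg_AE)
  have "I = (I powr (1/p)) powr p" using I0 assms(2) by (simp add: powr_powr powr_one)
  also have "\<dots> \<le> C powr p" using assms unfolding normp_def I_def[symmetric]
    by (intro powr_mono2) auto
  finally show ?thesis unfolding I_def .
qed

lemma sq_le_powr:
  fixes x :: real assumes "p \<ge> 2"
  shows "x\<^sup>2 \<le> 1 + \<bar>x\<bar> powr p"
proof (cases "\<bar>x\<bar> \<le> 1")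
  case True
  then have "x\<^sup>2 \<le> 1" by (simp add: abs_square_le_1)
  then show ?thesis by (smt (verit) powr_ge_zero)
next
  case False
  then have "\<bar>x\<bar> powr 2 \<le> \<bar>x\<bar> powr p" using assms by (intro powr_mono) auto
  then show ?thesis using False by simp
qed

lemma L2_bound_Lp:
  assumes fm: "finite_measure (lebesgue_on \<Omega>)" and p: "p > 2"
    and h: "h \<in> L2 \<Omega>" "h \<in> Lp p \<Omega>" and C: "normp p \<Omega> h \<le> C"
  shows "(norm2 \<Omega> h)\<^sup>2 \<le> measure (lebesgue_on \<Omega>) (space (lebesgue_on \<Omega>)) + C powr p"
proof -
  let ?M = "lebesgue_on \<Omega>"
  have "(norm2 \<Omega> h)\<^sup>2 = (\<integral>x. (h x)\<^sup>2 \<partial>?M)" by (rule norm2_sq[OF h(1)])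
  also have "\<dots> \<le> (\<integral>x. 1 + \<bar>h x\<bar> powr p \<partial>?M)"
  proof (rule integral_mono)
    show "integrable ?M (\<lambda>x. (h x)\<^sup>2)" using h unfolding L2_def by auto
    show "integrable ?M (\<lambda>x. 1 + \<bar>h x\<bar> powr p)" using h fm unfolding Lp_def
      by (intro Bochner_Integration.integrable_add finite_measure.integrable_const) auto
    show "(h x)\<^sup>2 \<le> 1 + \<bar>h x\<bar> powr p" for x using sq_le_powr p by simp
  qed
  also have "\<dots> = measure ?M (space ?M) + (\<integral>x. \<bar>h x\<bar> powr p \<partial>?M)"
    using h fm unfolding Lp_def by (subst Bochner_Integration.integral_add) (auto intro: finite_measure.integrable_const)
  also have "\<dots> \<le> measure ?M (space ?M) + C powr p" using int_powr_le[OF C] p by simp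
  finally show ?thesis .
qed



lemma Lp_diff:
  assumes p: "p > 0" and a: "a \<in> Lp p \<Omega>" and b: "b \<in> Lp p \<Omega>"
  shows "(\<lambda>x. a x - b x) \<in> Lp p \<Omega>"
  unfolding Lp_def
proof (intro CollectI conjI)
  let ?M = "lebesgue_on \<Omega>"
  show m: "(\<lambda>x. a x - b x) \<in> borel_measurable ?M" using a b unfolding Lp_def by auto
  show "integrable ?M (\<lambda>x. \<bar>a x - b x\<bar> powr p)"
  proof (rule Bochner_Integration.integrable_bound)
    show "integrable ?M (\<lambda>x. 2 powr p * (\<bar>a x\<bar> powr p + \<bar>b x\<bar> powr p))"
      using a b unfolding Lp_def by auto
    show "(\<lambda>x. \<bar>a x - b x\<bar> powr p) \<in> borel_measurable ?M" using m by measurable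
    show "AE x in ?M. norm (\<bar>a x - b x\<bar> powr p) \<le> norm (2 powr p * (\<bar>a x\<bar> powr p + \<bar>b x\<bar> powr p))"
    proof (rule AE_I2)
      fix x
      define m where "m = max \<bar>a x\<bar> \<bar>b x\<bar>"
      have "\<bar>a x - b x\<bar> \<le> 2 * m" unfolding m_def by linarith
      then have "\<bar>a x - b x\<bar> powr p \<le> (2 * m) powr p" using p by (intro powr_mono2) auto
      also have "\<dots> = 2 powr p * m powr p" by (rule powr_mult)
      also have "m powr p \<le> \<bar>a x\<bar> powr p + \<bar>b x\<bar> powr p" unfolding m_def
        by (cases "\<bar>a x\<bar> \<le> \<bar>b x\<bar>") (auto simp: max_def)
      then have "2 powr p * m powr p \<le> 2 powr p * (\<bar>a x\<bar> powr p + \<bar>b x\<bar> powr p)"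
        by (intro mult_left_mono) auto
      finally show "norm (\<bar>a x - b x\<bar> powr p) \<le> norm (2 powr p * (\<bar>a x\<bar> powr p + \<bar>b x\<bar> powr p))"
        by simp
    qed
  qed
qed

lemma pw_eps:
  fixes x \<epsilon> p :: real assumes e: "\<epsilon> > 0" and p: "p > 2"
  shows "x\<^sup>2 \<le> \<epsilon>\<^sup>2 + \<epsilon> powr (2 - p) * \<bar>x\<bar> powr p"
proof (cases "\<bar>x\<bar> \<le> \<epsilon>")
  case True
  then have "\<bar>x\<bar>\<^sup>2 \<le> \<epsilon>\<^sup>2" by (intro power_mono) auto
  moreover have "0 \<le> \<epsilon> powr (2 - p) * \<bar>x\<bar> powr p" by simp
  ultimately show ?thesis by (simp only: power2_abs)
next
  case False
  then have x0: "\<bar>x\<bar> > \<epsilon>" by simp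
  have "\<bar>x\<bar> powr p = \<bar>x\<bar> powr 2 * \<bar>x\<bar> powr (p - 2)"
    using powr_add[of "\<bar>x\<bar>" 2 "p - 2"] by (simp del: powr_numeral)
  moreover have "\<epsilon> powr (p - 2) \<le> \<bar>x\<bar> powr (p - 2)" using x0 e p by (intro powr_mono2) auto
  moreover have "\<epsilon> powr (2 - p) * \<epsilon> powr (p - 2) = 1" using e by (simp add: powr_add[symmetric])
  ultimately have "1 \<le> \<epsilon> powr (2 - p) * \<bar>x\<bar> powr (p - 2)"
    by (metis mult_left_mono powr_ge_zero)
  then have "x\<^sup>2 * 1 \<le> x\<^sup>2 * (\<epsilon> powr (2 - p) * \<bar>x\<bar> powr (p - 2))"
    by (intro mult_left_mono) auto
  then have "\<epsilon> powr (2 - p) * \<bar>x\<bar> powr p \<ge> x\<^sup>2"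
    using \<open>\<bar>x\<bar> powr p = _\<close> by (simp add: algebra_simps)
  then show ?thesis by (smt (verit) zero_le_power2)
qed

lemma Lp_L2_conv:
  assumes fm: "finite_measure (lebesgue_on \<Omega>)" and p: "p > 2"
    and h: "\<And>j. h j \<in> L2 \<Omega>" "\<And>j. h j \<in> Lp p \<Omega>"
    and lim: "(\<lambda>j. normp p \<Omega> (h j)) \<longlonglongrightarrow> 0"
  shows "(\<lambda>j. norm2 \<Omega> (h j)) \<longlonglongrightarrow> 0"
proof -
  let ?M = "lebesgue_on \<Omega>"
  define \<mu> where "\<mu> = measure ?M (space ?M)"
  have \<mu>0: "\<mu> \<ge> 0" unfolding \<mu>_def by simp
  define I where "I = (\<lambda>j. \<integral>x. \<bar>h j x\<bar> powr p \<partial>?M)"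
  have I0: "I j \<ge> 0" for j unfolding I_def by (simp add: integral_nonneg_AE)
  have "I j = normp p \<Omega> (h j) powr p" for j
  proof -
    have "I j = (I j powr (1/p)) powr p" using I0[of j] p by (simp add: powr_powr powr_one)
    then show ?thesis by (simp add: normp_def I_def)
  qed
  moreover have "(\<lambda>j. normp p \<Omega> (h j) powr p) \<longlonglongrightarrow> 0"
    by (rule tendsto_zero_powrI[OF lim]) (use p in \<open>auto simp: normp_def\<close>)
  ultimately have Ilim: "I \<longlonglongrightarrow> 0" by (metis (no_types) ext)
  have sq: "(\<lambda>j. (norm2 \<Omega> (h j))\<^sup>2) \<longlonglongrightarrow> 0"
  proof (rule LIMSEQ_I)
    fix r :: real assume r: "r > 0"
    define \<epsilon> where "\<epsilon> = sqrt (r / (2 * (\<mu> + 1)))"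
    have e0: "\<epsilon> > 0" unfolding \<epsilon>_def using r \<mu>0 by simp
    have e2: "\<epsilon>\<^sup>2 = r / (2 * (\<mu> + 1))" unfolding \<epsilon>_def using r \<mu>0 by simp
    have e2\<mu>: "\<epsilon>\<^sup>2 * \<mu> < r / 2"
    proof -
      have "\<epsilon>\<^sup>2 * \<mu> = r / 2 * (\<mu> / (\<mu> + 1))" unfolding e2 using \<mu>0 by (simp add: field_simps)
      also have "\<dots> < r / 2 * 1" using r \<mu>0 by (intro mult_strict_left_mono) auto
      finally show ?thesis by simp
    qed
    define K where "K = \<epsilon> powr (2 - p)"
    have K0: "K > 0" unfolding K_def using e0 by simp
    obtain N where N: "\<And>j. j \<ge> N \<Longrightarrow> norm (I j - 0) < r / (2 * K)"
      using LIMSEQ_D[OF Ilim, of "r / (2 * K)"] r K0 by auto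
    show "\<exists>N. \<forall>j\<ge>N. norm ((norm2 \<Omega> (h j))\<^sup>2 - 0) < r"
    proof (intro exI allI impI)
      fix j assume j: "j \<ge> N"
      have IK: "K * I j < r / 2" using N[OF j] K0 I0[of j] by (simp add: field_simps)
      have "(norm2 \<Omega> (h j))\<^sup>2 = (\<integral>x. (h j x)\<^sup>2 \<partial>?M)" by (rule norm2_sq[OF h(1)])
      also have "\<dots> \<le> (\<integral>x. \<epsilon>\<^sup>2 + K * \<bar>h j x\<bar> powr p \<partial>?M)"
      proof (rule integral_mono)
        show "integrable ?M (\<lambda>x. (h j x)\<^sup>2)" using h(1)[of j] unfolding L2_def by auto
        show "integrable ?M (\<lambda>x. \<epsilon>\<^sup>2 + K * \<bar>h j x\<bar> powr p)" using h(2)[of j] fm unfolding Lp_def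
          by (intro Bochner_Integration.integrable_add finite_measure.integrable_const integrable_mult_right) auto
        show "(h j x)\<^sup>2 \<le> \<epsilon>\<^sup>2 + K * \<bar>h j x\<bar> powr p" for x unfolding K_def by (rule pw_eps[OF e0 p])
      qed
      also have "\<dots> = \<epsilon>\<^sup>2 * \<mu> + K * I j"
        using h(2)[of j] fm unfolding Lp_def I_def \<mu>_def
        by (subst Bochner_Integration.integral_add) (auto intro: finite_measure.integrable_const)
      finally have "(norm2 \<Omega> (h j))\<^sup>2 < r" using e2\<mu> IK by linarith
      then show "norm ((norm2 \<Omega> (h j))\<^sup>2 - 0) < r" by simp
    qed
  qed
  then have "(\<lambda>j. sqrt ((norm2 \<Omega> (h j))\<^sup>2)) \<longlonglongrightarrow> sqrt 0" by (rule tendsto_real_sqrt)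
  then show ?thesis by (simp add: abs_of_nonneg[OF norm2_nonneg])
qed



lemma inner2_diff_right:
  assumes "u \<in> L2 \<Omega>" "a \<in> L2 \<Omega>" "b \<in> L2 \<Omega>"
  shows "inner2 \<Omega> u (\<lambda>x. a x - b x) = inner2 \<Omega> u a - inner2 \<Omega> u b"
  unfolding inner2_def using L2_prod_int[OF assms(1,2)] L2_prod_int[OF assms(1,3)]
  by (simp add: right_diff_distrib)

lemma inner2_add_left:
  assumes "a \<in> L2 \<Omega>" "b \<in> L2 \<Omega>" "z \<in> L2 \<Omega>"
  shows "inner2 \<Omega> (\<lambda>x. a x + b x) z = inner2 \<Omega> a z + inner2 \<Omega> b z"
  unfolding inner2_def using L2_prod_int[OF assms(1,3)] L2_prod_int[OF assms(2,3)]
  by (simp add: distrib_right)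

lemma norm2_triangle:
  assumes a: "a \<in> L2 \<Omega>" and b: "b \<in> L2 \<Omega>"
  shows "norm2 \<Omega> (\<lambda>x. a x + b x) \<le> norm2 \<Omega> a + norm2 \<Omega> b"
proof -
  have "(norm2 \<Omega> (\<lambda>x. a x + b x))\<^sup>2 = (norm2 \<Omega> a)\<^sup>2 + 2 * inner2 \<Omega> a b + (norm2 \<Omega> b)\<^sup>2"
    using norm2_expand[OF a b, of 1] by simp
  also have "\<dots> \<le> (norm2 \<Omega> a)\<^sup>2 + 2 * (norm2 \<Omega> a * norm2 \<Omega> b) + (norm2 \<Omega> b)\<^sup>2"
    using CS2[OF a b] by linarith
  also have "\<dots> = (norm2 \<Omega> a + norm2 \<Omega> b)\<^sup>2" by (simp add: power2_sum)
  finally show ?thesis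
    using norm2_nonneg[of \<Omega> a] norm2_nonneg[of \<Omega> b] norm2_nonneg[of \<Omega> "\<lambda>x. a x + b x"]
    by (meson add_nonneg_nonneg power2_le_imp_le)
qed

lemma L2_bdd_mult_AE:
  assumes "u \<in> L2 \<Omega>" "\<psi> \<in> borel_measurable (lebesgue_on \<Omega>)" "AE x in lebesgue_on \<Omega>. \<bar>\<psi> x\<bar> \<le> 1"
  shows "(\<lambda>x. \<psi> x * u x) \<in> L2 \<Omega>"
  unfolding L2_def
proof (intro CollectI conjI)
  show "(\<lambda>x. \<psi> x * u x) \<in> borel_measurable (lebesgue_on \<Omega>)" using assms unfolding L2_def by auto
  show "integrable (lebesgue_on \<Omega>) (\<lambda>x. (\<psi> x * u x)\<^sup>2)"
  proof (rule Bochner_Integration.integrable_bound)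
    show "integrable (lebesgue_on \<Omega>) (\<lambda>x. (u x)\<^sup>2)" using assms unfolding L2_def by auto
    show "(\<lambda>x. (\<psi> x * u x)\<^sup>2) \<in> borel_measurable (lebesgue_on \<Omega>)" using assms unfolding L2_def by auto
    show "AE x in lebesgue_on \<Omega>. norm ((\<psi> x * u x)\<^sup>2) \<le> norm ((u x)\<^sup>2)"
      using assms(3)
    proof eventually_elim
      case (elim x)
      have "(\<psi> x)\<^sup>2 \<le> 1" using elim by (simp add: abs_square_le_1)
      then have "(\<psi> x)\<^sup>2 * (u x)\<^sup>2 \<le> 1 * (u x)\<^sup>2" by (intro mult_right_mono) auto
      then show ?case by (simp add: power_mult_distrib)
    qed
  qed
qed

lemma norm2_bdd_le:
  assumes "u \<in> L2 \<Omega>" "\<psi> \<in> borel_measurable (lebesgue_on \<Omega>)" "\<And>x. \<bar>\<psi> x\<bar> \<le> 1"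
  shows "norm2 \<Omega> (\<lambda>x. \<psi> x * u x) \<le> norm2 \<Omega> u"
proof -
  have "(\<integral>x. (\<psi> x * u x)\<^sup>2 \<partial>lebesgue_on \<Omega>) \<le> (\<integral>x. (u x)\<^sup>2 \<partial>lebesgue_on \<Omega>)"
  proof (rule integral_mono)
    show "integrable (lebesgue_on \<Omega>) (\<lambda>x. (\<psi> x * u x)\<^sup>2)" using L2_bdd_mult[OF assms] unfolding L2_def by auto
    show "integrable (lebesgue_on \<Omega>) (\<lambda>x. (u x)\<^sup>2)" using assms unfolding L2_def by auto
    fix x
    have "(\<psi> x)\<^sup>2 \<le> 1" using assms(3)[of x] by (simp add: abs_square_le_1)
    then have "(\<psi> x)\<^sup>2 * (u x)\<^sup>2 \<le> 1 * (u x)\<^sup>2" by (intro mult_right_mono) auto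
    then show "(\<psi> x * u x)\<^sup>2 \<le> (u x)\<^sup>2" by (simp add: power_mult_distrib)
  qed
  then show ?thesis unfolding norm2_def by simp
qed

lemma pair_lim:
  assumes y: "\<And>j. y j \<in> L2 \<Omega>" and yl: "yl \<in> L2 \<Omega>"
    and wk: "\<forall>z\<in>L2 \<Omega>. (\<lambda>j. inner2 \<Omega> (y j) z) \<longlonglongrightarrow> inner2 \<Omega> yl z"
    and B: "\<And>j. norm2 \<Omega> (y j) \<le> B"
    and a: "\<And>j. a j \<in> L2 \<Omega>" and al: "al \<in> L2 \<Omega>"
    and sc: "(\<lambda>j. norm2 \<Omega> (\<lambda>x. a j x - al x)) \<longlonglongrightarrow> 0"
  shows "(\<lambda>j. inner2 \<Omega> (y j) (a j)) \<longlonglongrightarrow> inner2 \<Omega> yl al"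
proof -
  have eq: "inner2 \<Omega> (y j) (a j) = inner2 \<Omega> (y j) (\<lambda>x. a j x - al x) + inner2 \<Omega> (y j) al" for j
    using inner2_diff_right[OF y a al] by simp
  have "(\<lambda>j. inner2 \<Omega> (y j) (\<lambda>x. a j x - al x)) \<longlonglongrightarrow> 0"
  proof (rule Lim_null_comparison)
    show "\<forall>\<^sub>F j in sequentially. norm (inner2 \<Omega> (y j) (\<lambda>x. a j x - al x)) \<le> B * norm2 \<Omega> (\<lambda>x. a j x - al x)"
    proof (intro always_eventually allI)
      fix j
      have "norm (inner2 \<Omega> (y j) (\<lambda>x. a j x - al x)) \<le> norm2 \<Omega> (y j) * norm2 \<Omega> (\<lambda>x. a j x - al x)"
        using CS2[OF y L2_diff[OF a al]] by simp
      also have "\<dots> \<le> B * norm2 \<Omega> (\<lambda>x. a j x - al x)"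
        using B norm2_nonneg by (intro mult_right_mono) auto
      finally show "norm (inner2 \<Omega> (y j) (\<lambda>x. a j x - al x)) \<le> B * norm2 \<Omega> (\<lambda>x. a j x - al x)" .
    qed
    show "(\<lambda>j. B * norm2 \<Omega> (\<lambda>x. a j x - al x)) \<longlonglongrightarrow> 0"
      using tendsto_mult_left[OF sc, of B] by simp
  qed
  moreover have "(\<lambda>j. inner2 \<Omega> (y j) al) \<longlonglongrightarrow> inner2 \<Omega> yl al" using wk al by blast
  ultimately have "(\<lambda>j. inner2 \<Omega> (y j) (\<lambda>x. a j x - al x) + inner2 \<Omega> (y j) al) \<longlonglongrightarrow> 0 + inner2 \<Omega> yl al"
    by (rule tendsto_add)
  then show ?thesis unfolding eq by simp
qed

lemma dct_strong:
  assumes h: "h \<in> L2 \<Omega>"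
    and cm: "\<And>n. c n \<in> borel_measurable (lebesgue_on \<Omega>)" and clm: "cl \<in> borel_measurable (lebesgue_on \<Omega>)"
    and cb: "\<And>n x. \<bar>c n x\<bar> \<le> 1"
    and lim: "AE x in lebesgue_on \<Omega>. (\<lambda>n. c n x) \<longlonglongrightarrow> cl x"
  shows "(\<lambda>n. norm2 \<Omega> (\<lambda>x. c n x * h x - cl x * h x)) \<longlonglongrightarrow> 0"
proof -
  let ?M = "lebesgue_on \<Omega>"
  have hm: "h \<in> borel_measurable ?M" and hi: "integrable ?M (\<lambda>x. (h x)\<^sup>2)" using h unfolding L2_def by auto
  have clb: "AE x in ?M. \<bar>cl x\<bar> \<le> 1" using lim
  proof eventually_elim
    case (elim x)
    then have "(\<lambda>n. \<bar>c n x\<bar>) \<longlonglongrightarrow> \<bar>cl x\<bar>" by (rule tendsto_rabs)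
    then show ?case by (rule LIMSEQ_le_const2) (use cb in auto)
  qed
  have "(\<lambda>n. \<integral>x. (c n x * h x - cl x * h x)\<^sup>2 \<partial>?M) \<longlonglongrightarrow> (\<integral>x. 0 \<partial>?M)"
  proof (rule integral_dominated_convergence[where w = "\<lambda>x. 4 * (h x)\<^sup>2"])
    show "(\<lambda>x. 0::real) \<in> borel_measurable ?M" by simp
    show "(\<lambda>x. (c n x * h x - cl x * h x)\<^sup>2) \<in> borel_measurable ?M" for n using cm clm hm by measurable
    show "integrable ?M (\<lambda>x. 4 * (h x)\<^sup>2)" using hi by simp
    show "AE x in ?M. (\<lambda>n. (c n x * h x - cl x * h x)\<^sup>2) \<longlonglongrightarrow> 0" using lim
    proof eventually_elim
      case (elim x)
      have "(\<lambda>n. (c n x * h x - cl x * h x)\<^sup>2) \<longlonglongrightarrow> (cl x * h x - cl x * h x)\<^sup>2"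
        by (intro tendsto_intros elim)
      then show ?case by simp
    qed
    show "AE x in ?M. norm ((c n x * h x - cl x * h x)\<^sup>2) \<le> 4 * (h x)\<^sup>2" for n using clb
    proof eventually_elim
      case (elim x)
      have "\<bar>c n x - cl x\<bar> \<le> 2" using elim cb[of n x] by linarith
      then have "(c n x - cl x)\<^sup>2 \<le> 2\<^sup>2" by (metis abs_le_square_iff abs_numeral)
      then have "(c n x - cl x)\<^sup>2 * (h x)\<^sup>2 \<le> 2\<^sup>2 * (h x)\<^sup>2" by (intro mult_right_mono) auto
      then show ?case by (simp add: power_mult_distrib left_diff_distrib[symmetric])
    qed
  qed
  then have "(\<lambda>n. sqrt (\<integral>x. (c n x * h x - cl x * h x)\<^sup>2 \<partial>?M)) \<longlonglongrightarrow> sqrt 0"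
    by (intro tendsto_real_sqrt) simp
  then show ?thesis unfolding norm2_def by simp
qed

lemma weak_shift:
  assumes y: "\<And>j. y j \<in> L2 \<Omega>" and z: "\<And>j. z j \<in> L2 \<Omega>"
    and wk: "\<forall>w\<in>L2 \<Omega>. (\<lambda>j. inner2 \<Omega> (y j) w) \<longlonglongrightarrow> inner2 \<Omega> yl w"
    and d: "(\<lambda>j. norm2 \<Omega> (\<lambda>x. z j x - y j x)) \<longlonglongrightarrow> 0"
  shows "\<forall>w\<in>L2 \<Omega>. (\<lambda>j. inner2 \<Omega> (z j) w) \<longlonglongrightarrow> inner2 \<Omega> yl w"
proof
  fix w assume w: "w \<in> L2 \<Omega>"
  have eq: "inner2 \<Omega> (z j) w = inner2 \<Omega> (y j) w + inner2 \<Omega> (\<lambda>x. z j x - y j x) w" for j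
    using inner2_add_left[OF y[of j] L2_diff[OF z[of j] y[of j]] w] by simp
  have "(\<lambda>j. inner2 \<Omega> (\<lambda>x. z j x - y j x) w) \<longlonglongrightarrow> 0"
  proof (rule Lim_null_comparison)
    show "\<forall>\<^sub>F j in sequentially. norm (inner2 \<Omega> (\<lambda>x. z j x - y j x) w) \<le> norm2 \<Omega> (\<lambda>x. z j x - y j x) * norm2 \<Omega> w"
      using CS2[OF L2_diff[OF z y] w] by (intro always_eventually allI) simp
    show "(\<lambda>j. norm2 \<Omega> (\<lambda>x. z j x - y j x) * norm2 \<Omega> w) \<longlonglongrightarrow> 0"
      using tendsto_mult_right[OF d, of "norm2 \<Omega> w"] by simp
  qed
  then have "(\<lambda>j. inner2 \<Omega> (y j) w + inner2 \<Omega> (\<lambda>x. z j x - y j x) w) \<longlonglongrightarrow> inner2 \<Omega> yl w + 0"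
    using wk w by (intro tendsto_add) auto
  then show "(\<lambda>j. inner2 \<Omega> (z j) w) \<longlonglongrightarrow> inner2 \<Omega> yl w" unfolding eq by simp
qed

lemma int_lin5:
  fixes f1 f2 f3 f4 f5 :: "'b \<Rightarrow> real"
  assumes "integrable M f1" "integrable M f2" "integrable M f3" "integrable M f4" "integrable M f5"
  shows "(\<integral>x. c1 * f1 x + c2 * f2 x + c3 * f3 x + c4 * f4 x + c5 * f5 x \<partial>M) =
    c1 * (\<integral>x. f1 x \<partial>M) + c2 * (\<integral>x. f2 x \<partial>M) + c3 * (\<integral>x. f3 x \<partial>M) + c4 * (\<integral>x. f4 x \<partial>M) + c5 * (\<integral>x. f5 x \<partial>M)"
  using assms by (simp add: Bochner_Integration.integral_add)



theorem mainTheorem10: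
  fixes \<Omega> :: "'a::euclidean_space set"
    and f :: "('a \<Rightarrow> real) \<Rightarrow> real" and G :: "('a \<Rightarrow> real) \<Rightarrow> ('a \<Rightarrow> real)"
    and \<alpha> \<beta> Lf L p :: real and b :: ereal
    and u :: "nat \<Rightarrow> 'a \<Rightarrow> real" and chiL ustar :: "'a \<Rightarrow> real"
  assumes "open \<Omega>" and "bounded \<Omega>"
    and "\<alpha> \<ge> 0" and "\<beta> > 0" and "b > 0"
    and "standing_f \<Omega> f G Lf"
    and "p > 2" and "L > Lf"
    and "\<forall>v\<in>L2 \<Omega>. G v \<in> Lp p \<Omega>"
    and "\<forall>v w. weak_conv_L2 \<Omega> v w \<longrightarrow>
            (\<lambda>k. normp p \<Omega> (\<lambda>x. G (v k) x - G w x)) \<longlonglongrightarrow> 0"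
    and "IHT_seq \<Omega> b f G \<alpha> \<beta> L u"
    and "\<exists>C. \<forall>k. u k \<in> Lp p \<Omega> \<and> normp p \<Omega> (u k) \<le> C"
    and "chiL \<in> borel_measurable (lebesgue_on \<Omega>)"
    and "integrable (lebesgue_on \<Omega>) chiL"
    and "(\<lambda>k. \<integral>x. \<bar>chi (u k) x - chiL x\<bar> \<partial>(lebesgue_on \<Omega>)) \<longlonglongrightarrow> 0"
    and "ustar \<in> Uad \<Omega> b"
    and "\<exists>r. strict_mono r \<and> weak_conv_L2 \<Omega> (u \<circ> r) ustar"
  shows "\<forall>v\<in>Uad \<Omega> b \<inter> Lp p \<Omega>. AE x in lebesgue_on \<Omega>.
           (G ustar x + \<alpha> * ustar x) * (v x - ustar x) * chiL x \<ge> 0"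
proof -
  let ?M = "lebesgue_on \<Omega>"
  have fm: "finite_measure ?M" by (rule fin_meas[OF assms(1,2)])
  have sp: "space ?M = \<Omega>" by (rule space_leb_on[OF assms(1)])
  have sf: "standing_f \<Omega> f G Lf" and seq: "IHT_seq \<Omega> b f G \<alpha> \<beta> L u" using assms by auto
  have \<alpha>: "\<alpha> \<ge> 0" and \<beta>: "\<beta> \<ge> 0" and p: "p > 2" using assms by auto
  have uU: "u k \<in> Uad \<Omega> b" for k using IHT_L2[OF seq] .
  have uL: "u k \<in> L2 \<Omega>" for k using uU Uad_L2 by blast
  have um: "u k \<in> borel_measurable ?M" for k using uL[of k] unfolding L2_def by auto
  have GL2: "\<forall>u\<in>L2 \<Omega>. G u \<in> L2 \<Omega>" using sf unfolding standing_f_def by blast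
  have ustarL: "ustar \<in> L2 \<Omega>" using assms(16) Uad_L2 by blast
  define Gs where "Gs = G ustar"
  have GsL: "Gs \<in> L2 \<Omega>" unfolding Gs_def using GL2 ustarL by blast
  obtain r where r: "strict_mono r" "weak_conv_L2 \<Omega> (u \<circ> r) ustar" using assms(17) by blast
  obtain C where C: "\<forall>k. u k \<in> Lp p \<Omega> \<and> normp p \<Omega> (u k) \<le> C" using assms(12) by blast
  define B where "B = sqrt (measure ?M (space ?M) + C powr p)"
  have uB: "norm2 \<Omega> (u k) \<le> B" for k
    unfolding B_def using L2_bound_Lp[OF fm p uL[of k]] C norm2_nonneg by (intro real_le_rsqrt) auto
  define Xi where "Xi = (\<lambda>k. chi (u k))"
  have Xieq: "Xi k = (\<lambda>x. if u k x \<noteq> 0 then 1 else 0)" for k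
    unfolding Xi_def chi_def by (auto simp: indicator_def fun_eq_iff)
  have Xim: "Xi k \<in> borel_measurable ?M" for k unfolding Xieq using um[of k] by measurable
  have Xi01: "0 \<le> Xi k x \<and> Xi k x \<le> 1" for k x unfolding Xieq by auto
  have Xi0: "u k x = 0 \<Longrightarrow> Xi k x = 0" for k x unfolding Xieq by auto
  have Xiint: "integrable ?M (Xi k)" for k
  proof (rule Bochner_Integration.integrable_bound)
    show "integrable ?M (\<lambda>x. 1::real)" using fm by (rule finite_measure.integrable_const)
    show "Xi k \<in> borel_measurable ?M" by (rule Xim)
    show "AE x in ?M. norm (Xi k x) \<le> norm (1::real)" using Xi01 by auto
  qed
  have smr: "strict_mono (\<lambda>j. r j + 1)" using r(1) unfolding strict_mono_def by auto
  have "(\<lambda>j. \<integral>x. norm (Xi (r j + 1) x - chiL x) \<partial>?M) \<longlonglongrightarrow> 0"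
    using LIMSEQ_subseq_LIMSEQ[OF assms(15) smr] unfolding Xi_def o_def by simp
  then obtain s where s: "strict_mono s" "AE x in ?M. (\<lambda>j. Xi (r (s j) + 1) x - chiL x) \<longlonglongrightarrow> 0"
    using tendsto_L1_AE_subseq[of ?M "\<lambda>j x. Xi (r j + 1) x - chiL x"] Xiint assms(14) by auto
  define \<rho> where "\<rho> = r \<circ> s"
  have \<rho>: "strict_mono \<rho>" unfolding \<rho>_def using r(1) s(1) by (rule strict_mono_o)
  define y where "y = (\<lambda>j. u (Suc (\<rho> j)))"
  define z where "z = (\<lambda>j. u (\<rho> j))"
  have yL: "y j \<in> L2 \<Omega>" and zL: "z j \<in> L2 \<Omega>" for j unfolding y_def z_def by (rule uL)+
  have AEXi: "AE x in ?M. (\<lambda>j. Xi (Suc (\<rho> j)) x) \<longlonglongrightarrow> chiL x" using s(2)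
  proof eventually_elim
    case (elim x) then show ?case unfolding \<rho>_def o_def using LIM_zero_cancel by fastforce
  qed
  have wz: "\<forall>w\<in>L2 \<Omega>. (\<lambda>j. inner2 \<Omega> (z j) w) \<longlonglongrightarrow> inner2 \<Omega> ustar w"
  proof
    fix w assume "w \<in> L2 \<Omega>"
    then have "(\<lambda>k. inner2 \<Omega> ((u \<circ> r) k) w) \<longlonglongrightarrow> inner2 \<Omega> ustar w" using r(2) unfolding weak_conv_L2_def by blast
    from LIMSEQ_subseq_LIMSEQ[OF this s(1)] show "(\<lambda>j. inner2 \<Omega> (z j) w) \<longlonglongrightarrow> inner2 \<Omega> ustar w"
      unfolding z_def \<rho>_def o_def .
  qed
  have dz: "(\<lambda>j. norm2 \<Omega> (\<lambda>x. y j x - z j x)) \<longlonglongrightarrow> 0"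
    using LIMSEQ_subseq_LIMSEQ[OF seq_d0[OF sf seq \<alpha> \<beta> assms(8)] \<rho>] unfolding y_def z_def o_def .
  have wy: "\<forall>w\<in>L2 \<Omega>. (\<lambda>j. inner2 \<Omega> (y j) w) \<longlonglongrightarrow> inner2 \<Omega> ustar w"
    by (rule weak_shift[OF zL yL wz dz])
  have Gconv: "(\<lambda>j. norm2 \<Omega> (\<lambda>x. G (z j) x - Gs x)) \<longlonglongrightarrow> 0"
  proof -
    have "weak_conv_L2 \<Omega> z ustar" unfolding weak_conv_L2_def using zL ustarL wz by blast
    then have lim: "(\<lambda>j. normp p \<Omega> (\<lambda>x. G (z j) x - G ustar x)) \<longlonglongrightarrow> 0" using assms(10) by blast
    show ?thesis unfolding Gs_def
    proof (rule Lp_L2_conv[OF fm p _ _ lim])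
      show "(\<lambda>x. G (z j) x - G ustar x) \<in> L2 \<Omega>" for j using GL2 zL ustarL by (intro L2_diff) auto
      show "(\<lambda>x. G (z j) x - G ustar x) \<in> Lp p \<Omega>" for j using assms(9) zL ustarL p by (intro Lp_diff) auto
    qed
  qed
  define q where "q = (\<lambda>j x. G (z j) x + L * (y j x - z j x))"
  have qL: "q j \<in> L2 \<Omega>" for j
    unfolding q_def using L2_lin[OF bspec[OF GL2 zL[of j]] L2_diff[OF yL[of j] zL[of j]], of 1 L] by simp
  have qconv: "(\<lambda>j. norm2 \<Omega> (\<lambda>x. q j x - Gs x)) \<longlonglongrightarrow> 0"
  proof (rule Lim_null_comparison)
    show "\<forall>\<^sub>F j in sequentially. norm (norm2 \<Omega> (\<lambda>x. q j x - Gs x)) \<le> norm2 \<Omega> (\<lambda>x. G (z j) x - Gs x) + \<bar>L\<bar> * norm2 \<Omega> (\<lambda>x. y j x - z j x)"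
    proof (intro always_eventually allI)
      fix j
      have "(\<lambda>x. q j x - Gs x) = (\<lambda>x. (G (z j) x - Gs x) + L * (y j x - z j x))" unfolding q_def by auto
      then have "norm2 \<Omega> (\<lambda>x. q j x - Gs x) \<le> norm2 \<Omega> (\<lambda>x. G (z j) x - Gs x) + norm2 \<Omega> (\<lambda>x. L * (y j x - z j x))"
        using norm2_triangle[OF L2_diff[OF bspec[OF GL2 zL] GsL] L2_scale[OF L2_diff[OF yL zL]]] by simp
      then show "norm (norm2 \<Omega> (\<lambda>x. q j x - Gs x)) \<le> norm2 \<Omega> (\<lambda>x. G (z j) x - Gs x) + \<bar>L\<bar> * norm2 \<Omega> (\<lambda>x. y j x - z j x)"
        by (simp add: norm2_scale abs_of_nonneg[OF norm2_nonneg])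
    qed
    show "(\<lambda>j. norm2 \<Omega> (\<lambda>x. G (z j) x - Gs x) + \<bar>L\<bar> * norm2 \<Omega> (\<lambda>x. y j x - z j x)) \<longlonglongrightarrow> 0"
      using tendsto_add[OF Gconv tendsto_mult_left[OF dz, of "\<bar>L\<bar>"]] by simp
  qed
  have chiLb: "AE x in ?M. \<bar>chiL x\<bar> \<le> 1" using AEXi
  proof eventually_elim
    case (elim x)
    then have "(\<lambda>n. \<bar>Xi (Suc (\<rho> n)) x\<bar>) \<longlonglongrightarrow> \<bar>chiL x\<bar>" by (rule tendsto_rabs)
    then show ?case by (rule LIMSEQ_le_const2) (use Xi01 in auto)
  qed
  show ?thesis
  proof (intro ballI)
    fix v assume v: "v \<in> Uad \<Omega> b \<inter> Lp p \<Omega>"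
    then have vU: "v \<in> Uad \<Omega> b" by simp
    then have vL: "v \<in> L2 \<Omega>" by (rule Uad_L2)
    define H where "H = (\<lambda>x. (Gs x + \<alpha> * ustar x) * (v x - ustar x) * chiL x)"
    have key: "0 \<le> (\<integral>x. indicator A x * H x \<partial>?M)" if A: "A \<in> sets ?M" for A
    proof -
      have [measurable]: "A \<in> sets ?M" by (rule A)
      have [measurable]: "Xi k \<in> borel_measurable ?M" for k by (rule Xim)
      have [measurable]: "chiL \<in> borel_measurable ?M" by (rule assms(13))
      define \<psi> where "\<psi> = (\<lambda>j x. indicator A x * Xi (Suc (\<rho> j)) x)"
      define \<psi>l where "\<psi>l = (\<lambda>x. indicator A x * chiL x)"
      have \<psi>m: "\<psi> j \<in> borel_measurable ?M" for j unfolding \<psi>_def by measurable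
      have \<psi>lm: "\<psi>l \<in> borel_measurable ?M" unfolding \<psi>l_def by measurable
      have \<psi>01: "0 \<le> \<psi> j x \<and> \<psi> j x \<le> 1" for j x unfolding \<psi>_def using Xi01 by (auto simp: indicator_def)
      then have \<psi>b: "\<bar>\<psi> j x\<bar> \<le> 1" for j x by (meson abs_le_iff order.trans neg_le_0_iff_le)
      have \<psi>0: "y j x = 0 \<Longrightarrow> \<psi> j x = 0" for j x unfolding \<psi>_def y_def using Xi0 by auto
      have \<psi>lim: "AE x in ?M. (\<lambda>j. \<psi> j x) \<longlonglongrightarrow> \<psi>l x" using AEXi
      proof eventually_elim
        case (elim x) then show ?case unfolding \<psi>_def \<psi>l_def by (intro tendsto_mult_left)
      qed
      have \<psi>lb: "AE x in ?M. \<bar>\<psi>l x\<bar> \<le> 1" using chiLb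
      proof eventually_elim
        case (elim x) then show ?case unfolding \<psi>l_def by (auto simp: indicator_def)
      qed
      have opt: "0 \<le> (\<integral>x. \<psi> j x * (G (z j) x + L * (y j x - z j x) + \<alpha> * y j x) * (v x - y j x) \<partial>?M)" for j
      proof -
        have mn: "\<forall>w\<in>Uad \<Omega> b. iht_obj \<Omega> f G \<alpha> \<beta> L (z j) (y j) \<le> iht_obj \<Omega> f G \<alpha> \<beta> L (z j) w"
          using seq unfolding IHT_seq_def y_def z_def by blast
        have yU: "y j \<in> Uad \<Omega> b" unfolding y_def by (rule uU)
        show ?thesis
          by (rule opt_ineq[OF assms(1) assms(2) \<beta> zL yU bspec[OF GL2 zL] mn refl vU \<psi>m \<psi>01 \<psi>0])
      qed
      define aq where "aq = (\<lambda>j x. \<psi> j x * q j x)"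
      define av where "av = (\<lambda>j x. \<psi> j x * v x)"
      define au where "au = (\<lambda>j x. \<psi> j x * ustar x)"
      define aql where "aql = (\<lambda>x. \<psi>l x * Gs x)"
      define avl where "avl = (\<lambda>x. \<psi>l x * v x)"
      define aul where "aul = (\<lambda>x. \<psi>l x * ustar x)"
      have aqL: "aq j \<in> L2 \<Omega>" for j unfolding aq_def by (rule L2_bdd_mult[OF qL \<psi>m \<psi>b])
      have avL: "av j \<in> L2 \<Omega>" for j unfolding av_def by (rule L2_bdd_mult[OF vL \<psi>m \<psi>b])
      have auL: "au j \<in> L2 \<Omega>" for j unfolding au_def by (rule L2_bdd_mult[OF ustarL \<psi>m \<psi>b])
      have aqlL: "aql \<in> L2 \<Omega>" unfolding aql_def by (rule L2_bdd_mult_AE[OF GsL \<psi>lm \<psi>lb])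
      have avlL: "avl \<in> L2 \<Omega>" unfolding avl_def by (rule L2_bdd_mult_AE[OF vL \<psi>lm \<psi>lb])
      have aulL: "aul \<in> L2 \<Omega>" unfolding aul_def by (rule L2_bdd_mult_AE[OF ustarL \<psi>lm \<psi>lb])
      have scv: "(\<lambda>j. norm2 \<Omega> (\<lambda>x. av j x - avl x)) \<longlonglongrightarrow> 0"
        unfolding av_def avl_def by (rule dct_strong[OF vL \<psi>m \<psi>lm \<psi>b \<psi>lim])
      have scu: "(\<lambda>j. norm2 \<Omega> (\<lambda>x. au j x - aul x)) \<longlonglongrightarrow> 0"
        unfolding au_def aul_def by (rule dct_strong[OF ustarL \<psi>m \<psi>lm \<psi>b \<psi>lim])
      have scG: "(\<lambda>j. norm2 \<Omega> (\<lambda>x. \<psi> j x * Gs x - \<psi>l x * Gs x)) \<longlonglongrightarrow> 0"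
        by (rule dct_strong[OF GsL \<psi>m \<psi>lm \<psi>b \<psi>lim])
      have scq: "(\<lambda>j. norm2 \<Omega> (\<lambda>x. aq j x - aql x)) \<longlonglongrightarrow> 0"
      proof (rule Lim_null_comparison)
        show "\<forall>\<^sub>F j in sequentially. norm (norm2 \<Omega> (\<lambda>x. aq j x - aql x)) \<le>
            norm2 \<Omega> (\<lambda>x. q j x - Gs x) + norm2 \<Omega> (\<lambda>x. \<psi> j x * Gs x - \<psi>l x * Gs x)"
        proof (intro always_eventually allI)
          fix j
          have e: "(\<lambda>x. aq j x - aql x) = (\<lambda>x. \<psi> j x * (q j x - Gs x) + (\<psi> j x * Gs x - \<psi>l x * Gs x))"
            unfolding aq_def aql_def by (auto simp: algebra_simps)
          have d1: "(\<lambda>x. \<psi> j x * (q j x - Gs x)) \<in> L2 \<Omega>" by (rule L2_bdd_mult[OF L2_diff[OF qL GsL] \<psi>m \<psi>b])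
          have d2: "(\<lambda>x. \<psi> j x * Gs x - \<psi>l x * Gs x) \<in> L2 \<Omega>"
            by (rule L2_diff[OF L2_bdd_mult[OF GsL \<psi>m \<psi>b] L2_bdd_mult_AE[OF GsL \<psi>lm \<psi>lb]])
          have "norm2 \<Omega> (\<lambda>x. aq j x - aql x) \<le> norm2 \<Omega> (\<lambda>x. \<psi> j x * (q j x - Gs x)) + norm2 \<Omega> (\<lambda>x. \<psi> j x * Gs x - \<psi>l x * Gs x)"
            unfolding e by (rule norm2_triangle[OF d1 d2])
          also have "norm2 \<Omega> (\<lambda>x. \<psi> j x * (q j x - Gs x)) \<le> norm2 \<Omega> (\<lambda>x. q j x - Gs x)"
            by (rule norm2_bdd_le[OF L2_diff[OF qL GsL] \<psi>m \<psi>b])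
          finally show "norm (norm2 \<Omega> (\<lambda>x. aq j x - aql x)) \<le>
            norm2 \<Omega> (\<lambda>x. q j x - Gs x) + norm2 \<Omega> (\<lambda>x. \<psi> j x * Gs x - \<psi>l x * Gs x)"
            by (simp add: abs_of_nonneg[OF norm2_nonneg])
        qed
        show "(\<lambda>j. norm2 \<Omega> (\<lambda>x. q j x - Gs x) + norm2 \<Omega> (\<lambda>x. \<psi> j x * Gs x - \<psi>l x * Gs x)) \<longlonglongrightarrow> 0"
          using tendsto_add[OF qconv scG] by simp
      qed
      have vconst: "\<forall>w\<in>L2 \<Omega>. (\<lambda>j. inner2 \<Omega> v w) \<longlonglongrightarrow> inner2 \<Omega> v w" by simp
      have uconst: "\<forall>w\<in>L2 \<Omega>. (\<lambda>j. inner2 \<Omega> ustar w) \<longlonglongrightarrow> inner2 \<Omega> ustar w" by simp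
      have yB: "norm2 \<Omega> (y j) \<le> B" for j unfolding y_def by (rule uB)
      have l1: "(\<lambda>j. inner2 \<Omega> v (aq j)) \<longlonglongrightarrow> inner2 \<Omega> v aql"
        by (rule pair_lim[OF vL vL vconst order_refl aqL aqlL scq])
      have l2: "(\<lambda>j. inner2 \<Omega> (y j) (aq j)) \<longlonglongrightarrow> inner2 \<Omega> ustar aql"
        by (rule pair_lim[OF yL ustarL wy yB aqL aqlL scq])
      have l3: "(\<lambda>j. inner2 \<Omega> (y j) (av j)) \<longlonglongrightarrow> inner2 \<Omega> ustar avl"
        by (rule pair_lim[OF yL ustarL wy yB avL avlL scv])
      have l4: "(\<lambda>j. inner2 \<Omega> (y j) (au j)) \<longlonglongrightarrow> inner2 \<Omega> ustar aul"
        by (rule pair_lim[OF yL ustarL wy yB auL aulL scu])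
      have l5: "(\<lambda>j. inner2 \<Omega> ustar (au j)) \<longlonglongrightarrow> inner2 \<Omega> ustar aul"
        by (rule pair_lim[OF ustarL ustarL uconst order_refl auL aulL scu])
      define T where "T = (\<lambda>j. 1 * inner2 \<Omega> v (aq j) + (-1) * inner2 \<Omega> (y j) (aq j) + \<alpha> * inner2 \<Omega> (y j) (av j)
          + (-2 * \<alpha>) * inner2 \<Omega> (y j) (au j) + \<alpha> * inner2 \<Omega> ustar (au j))"
      define Tl where "Tl = 1 * inner2 \<Omega> v aql + (-1) * inner2 \<Omega> ustar aql + \<alpha> * inner2 \<Omega> ustar avl
          + (-2 * \<alpha>) * inner2 \<Omega> ustar aul + \<alpha> * inner2 \<Omega> ustar aul"
      have Tlim: "T \<longlonglongrightarrow> Tl" unfolding T_def Tl_def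
        by (intro tendsto_add tendsto_mult_left l1 l2 l3 l4 l5)
      have Tge: "0 \<le> T j" for j
      proof -
        have "T j = (\<integral>x. 1 * (v x * aq j x) + (-1) * (y j x * aq j x) + \<alpha> * (y j x * av j x)
            + (-2 * \<alpha>) * (y j x * au j x) + \<alpha> * (ustar x * au j x) \<partial>?M)"
          unfolding T_def inner2_def
          by (rule int_lin5[symmetric]) (intro L2_prod_int vL yL ustarL aqL avL auL)+
        also have "\<dots> \<ge> (\<integral>x. \<psi> j x * (G (z j) x + L * (y j x - z j x) + \<alpha> * y j x) * (v x - y j x) \<partial>?M)"
        proof (rule integral_mono)
          have "integrable ?M (\<lambda>x. (\<psi> j x * (1 * q j x + \<alpha> * y j x)) * (v x - y j x))"
            by (rule L2_prod_int[OF L2_bdd_mult[OF L2_lin[OF qL yL] \<psi>m \<psi>b] L2_diff[OF vL yL]])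
          then show "integrable ?M (\<lambda>x. \<psi> j x * (G (z j) x + L * (y j x - z j x) + \<alpha> * y j x) * (v x - y j x))"
            unfolding q_def by simp
          show "integrable ?M (\<lambda>x. 1 * (v x * aq j x) + (-1) * (y j x * aq j x) + \<alpha> * (y j x * av j x)
            + (-2 * \<alpha>) * (y j x * au j x) + \<alpha> * (ustar x * au j x))"
            by (intro Bochner_Integration.integrable_add integrable_mult_right L2_prod_int vL yL ustarL aqL avL auL)
          fix x
          have "(1 * (v x * aq j x) + (-1) * (y j x * aq j x) + \<alpha> * (y j x * av j x)
            + (-2 * \<alpha>) * (y j x * au j x) + \<alpha> * (ustar x * au j x))
            - \<psi> j x * (G (z j) x + L * (y j x - z j x) + \<alpha> * y j x) * (v x - y j x)
            = \<alpha> * (\<psi> j x * (y j x - ustar x)\<^sup>2)"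
            unfolding aq_def av_def au_def q_def by (simp add: algebra_simps power2_eq_square)
          moreover have "0 \<le> \<alpha> * (\<psi> j x * (y j x - ustar x)\<^sup>2)" using \<alpha> \<psi>01[of j x] by simp
          ultimately show "\<psi> j x * (G (z j) x + L * (y j x - z j x) + \<alpha> * y j x) * (v x - y j x) \<le>
            1 * (v x * aq j x) + (-1) * (y j x * aq j x) + \<alpha> * (y j x * av j x)
            + (-2 * \<alpha>) * (y j x * au j x) + \<alpha> * (ustar x * au j x)" by linarith
        qed
        finally show ?thesis using opt[of j] by linarith
      qed
      have "0 \<le> Tl" using Tlim Tge by (intro LIMSEQ_le_const) auto
      also have "Tl = (\<integral>x. 1 * (v x * aql x) + (-1) * (ustar x * aql x) + \<alpha> * (ustar x * avl x)
            + (-2 * \<alpha>) * (ustar x * aul x) + \<alpha> * (ustar x * aul x) \<partial>?M)"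
        unfolding Tl_def inner2_def
        by (rule int_lin5[symmetric]) (intro L2_prod_int vL ustarL aqlL avlL aulL)+
      also have "\<dots> = (\<integral>x. indicator A x * H x \<partial>?M)"
        by (rule Bochner_Integration.integral_cong)
          (auto simp: aql_def avl_def aul_def \<psi>l_def H_def algebra_simps power2_eq_square)
      finally show ?thesis .
    qed
    have [measurable]: "Gs \<in> borel_measurable ?M" "ustar \<in> borel_measurable ?M" "v \<in> borel_measurable ?M"
      "chiL \<in> borel_measurable ?M" using GsL ustarL vL assms(13) unfolding L2_def by auto
    have Hm: "H \<in> borel_measurable ?M" unfolding H_def by measurable
    have Hint: "integrable ?M H"
    proof (rule Bochner_Integration.integrable_bound)
      show "integrable ?M (\<lambda>x. (Gs x + \<alpha> * ustar x) * (v x - ustar x))"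
        using L2_prod_int[OF L2_lin[OF GsL ustarL, of 1 \<alpha>] L2_diff[OF vL ustarL]] by simp
      show "H \<in> borel_measurable ?M" by (rule Hm)
      show "AE x in ?M. norm (H x) \<le> norm ((Gs x + \<alpha> * ustar x) * (v x - ustar x))" using chiLb
      proof eventually_elim
        case (elim x)
        then show ?case unfolding H_def by (simp add: abs_mult mult_left_le)
      qed
    qed
    define A0 where "A0 = {x \<in> space ?M. H x < 0}"
    have A0: "A0 \<in> sets ?M" unfolding A0_def using Hm by measurable
    have i0: "integrable ?M (\<lambda>x. - (indicator A0 x * H x))"
      using integrable_real_mult_indicator[OF A0 Hint] by (simp add: mult.commute)
    have nn: "AE x in ?M. 0 \<le> - (indicator A0 x * H x)"
      by (rule AE_I2) (auto simp: A0_def indicator_def)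
    have "(\<integral>x. - (indicator A0 x * H x) \<partial>?M) \<le> 0" using key[OF A0] by simp
    moreover have "(\<integral>x. - (indicator A0 x * H x) \<partial>?M) \<ge> 0" using nn by (rule integral_nonneg_AE)
    ultimately have "(\<integral>x. - (indicator A0 x * H x) \<partial>?M) = 0" by simp
    then have "AE x in ?M. - (indicator A0 x * H x) = 0" using integral_nonneg_eq_0_iff_AE[OF i0 nn] by simp
    then show "AE x in ?M. (G ustar x + \<alpha> * ustar x) * (v x - ustar x) * chiL x \<ge> 0"
    proof (rule AE_mp[OF _ AE_I2], intro impI)
      fix x assume "x \<in> space ?M" "- (indicator A0 x * H x) = 0"
      then show "(G ustar x + \<alpha> * ustar x) * (v x - ustar x) * chiL x \<ge> 0"
        unfolding A0_def H_def Gs_def by (auto simp: indicator_def split: if_splits)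
    qed
  qed
qed


end
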